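(* Let $N\geq 2$ and let $\Sigma$ be the one-sided shift on $\{0,1,\dots,N-1\}^{\mathbb{N}_0}$, ordered lexicographically. Then for every $L\geq N+2$ there exists a forbidden order pattern $\pi\in\mathcal{S}_L$ for $\Sigma$.
   Context: $\{0,1,\dots,N-1\}^{\mathbb{N}_0}$ is the set of sequences $\omega=(\omega_0,\omega_1,\dots)$ with $\omega_n\in\{0,\dots,N-1\}$, and $\Sigma(\omega_0,\omega_1,\omega_2,\dots)=(\omega_1,\omega_2,\dots)$. The lexicographic order: $\omega<\omega'$ iff $\omega_0<\omega'_0$, or there is $n\geq1$ with $\omega_k=\omega'_k$ for $k<n$ and $\omega_n<\omega'_n$. $\mathcal{S}_L$ is the set of permutations $\pi=[\pi_0,\dots,\pi_{L-1}]$ of $\{0,\dots,L-1\}$. A sequence $\omega$ defines $\pi$ if $\Sigma^{\pi_0}(\omega)<\Sigma^{\pi_1}(\omega)<\dots<\Sigma^{\pi_{L-1}}(\omega)$. A pattern $\pi\in\mathcal{S}_L$ is forbidden for $\Sigma$ if no $\omega$ defines it. *)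

theory Defs
  imports Main
begin

definition seq_space :: "nat \<Rightarrow> (nat \<Rightarrow> nat) set" where
  "seq_space N = {\<omega>. \<forall>n. \<omega> n < N}"

definition shift :: "(nat \<Rightarrow> nat) \<Rightarrow> (nat \<Rightarrow> nat)" where
  "shift \<omega> = (\<lambda>n. \<omega> (Suc n))"

definition lex_less :: "(nat \<Rightarrow> nat) \<Rightarrow> (nat \<Rightarrow> nat) \<Rightarrow> bool" where
  "lex_less \<omega> \<omega>' \<longleftrightarrow> (\<exists>n. (\<forall>k<n. \<omega> k = \<omega>' k) \<and> \<omega> n < \<omega>' n)"

definition perms :: "nat \<Rightarrow> nat list set" where
  "perms L = {\<pi>. distinct \<pi> \<and> set \<pi> = {0..<L}}"

definition defines_pattern :: "(nat \<Rightarrow> nat) \<Rightarrow> nat list \<Rightarrow> bool" where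
  "defines_pattern \<omega> \<pi> \<longleftrightarrow>
     (\<forall>i. Suc i < length \<pi> \<longrightarrow> lex_less ((shift ^^ (\<pi> ! i)) \<omega>) ((shift ^^ (\<pi> ! Suc i)) \<omega>))"

definition forbidden :: "nat \<Rightarrow> nat list \<Rightarrow> bool" where
  "forbidden N \<pi> \<longleftrightarrow> \<not> (\<exists>\<omega>\<in>seq_space N. defines_pattern \<omega> \<pi>)"

end

theory Submission
  imports Defs
begin


lemma pow_shift: "(shift ^^ n) \<omega> = (\<lambda>m. \<omega> (m + n))"
  by (induction n) (auto simp: shift_def)

lemma lex_trans: assumes "lex_less x y" "lex_less y z" shows "lex_less x z"
proof -
  obtain n1 where n1: "\<forall>k<n1. x k = y k" "x n1 < y n1" using assms(1) lex_less_def by blast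
  obtain n2 where n2: "\<forall>k<n2. y k = z k" "y n2 < z n2" using assms(2) lex_less_def by blast
  show ?thesis
  proof (cases n1 n2 rule: linorder_cases)
    case less thus ?thesis using n1 n2 unfolding lex_less_def
      by (metis order.strict_trans)
  next
    case equal thus ?thesis using n1 n2 unfolding lex_less_def
      by (metis order.strict_trans)
  next
    case greater thus ?thesis using n1 n2 unfolding lex_less_def
      by (metis order.strict_trans)
  qed
qed

lemma lex_irrefl: "\<not> lex_less x x" unfolding lex_less_def by auto

lemma lex_asym: "lex_less x y \<Longrightarrow> lex_less y x \<Longrightarrow> False"
  using lex_trans lex_irrefl by blast

lemma lex_head: "lex_less x y \<Longrightarrow> x 0 \<le> y 0"
  unfolding lex_less_def by (metis le_eq_less_or_eq neq0_conv)

lemma lex_tail: assumes "lex_less x y" "x 0 = y 0" shows "lex_less (shift x) (shift y)"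
proof -
  obtain n where n: "\<forall>k<n. x k = y k" "x n < y n" using assms(1) lex_less_def by blast
  then obtain m where "n = Suc m" using assms(2) by (cases n) auto
  thus ?thesis using n unfolding lex_less_def shift_def by auto
qed

lemma chain:
  assumes "defines_pattern \<omega> \<pi>" "k < j" "j < length \<pi>"
  shows "lex_less ((shift ^^ (\<pi>!k)) \<omega>) ((shift ^^ (\<pi>!j)) \<omega>)"
  using assms(2,3)
proof (induction j)
  case 0 thus ?case by simp
next
  case (Suc j)
  have step: "lex_less ((shift ^^ (\<pi>!j)) \<omega>) ((shift ^^ (\<pi>!Suc j)) \<omega>)"
    using assms(1) Suc.prems unfolding defines_pattern_def by blast
  show ?case
  proof (cases "k = j")
    case True thus ?thesis using step by simp
  next
    case False
    hence "lex_less ((shift ^^ (\<pi>!k)) \<omega>) ((shift ^^ (\<pi>!j)) \<omega>)"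
      using Suc by simp
    thus ?thesis using step lex_trans by blast
  qed
qed


definition fpat :: "nat \<Rightarrow> nat \<Rightarrow> nat" where
  "fpat L i = (if i < L div 2 then L - 2 - 2*i else 2*(i - L div 2) + 1 - L mod 2)"

lemma fpat_alt:
  assumes "L = 2*h + r" "r < 2"
  shows "fpat L i = (if i < h then L - 2 - 2*i else 2*(i - h) + 1 - r)"
proof -
  have "L div 2 = h" "L mod 2 = r" using assms by auto
  thus ?thesis unfolding fpat_def by simp
qed

lemma fpat_range: "L \<ge> 2 \<Longrightarrow> i < L \<Longrightarrow> fpat L i < L"
proof -
  assume "L \<ge> 2" "i < L"
  define h where "h = L div 2"
  define r where "r = L mod 2"
  have L: "L = 2*h + r" "r < 2" unfolding h_def r_def by auto
  show ?thesis unfolding fpat_alt[OF L] using L \<open>i < L\<close> by auto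
qed
lemma par: "2*(x::nat) + r = 2*y + 1 - r \<Longrightarrow> r < 2 \<Longrightarrow> False" by presburger

lemma fpat_inj: "L \<ge> 2 \<Longrightarrow> inj_on (fpat L) {0..<L}"
proof (rule inj_onI)
  fix a b assume L2: "L \<ge> 2" and ab: "a \<in> {0..<L}" "b \<in> {0..<L}" and e: "fpat L a = fpat L b"
  define h where "h = L div 2"
  define r where "r = L mod 2"
  have L: "L = 2*h + r" "r < 2" unfolding h_def r_def by auto
  have fa: "fpat L a = (if a < h then L - 2 - 2*a else 2*(a - h) + 1 - r)" by (rule fpat_alt[OF L])
  have fb: "fpat L b = (if b < h then L - 2 - 2*b else 2*(b - h) + 1 - r)" by (rule fpat_alt[OF L])
  show "a = b"
  proof (cases "a < h"; cases "b < h")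
    assume "a < h" "b < h" 
    hence "L - 2 - 2*a = L - 2 - 2*b" using e fa fb by simp
    thus ?thesis using \<open>a < h\<close> \<open>b < h\<close> L by linarith
  next
    assume "\<not> a < h" "\<not> b < h"
    hence "2*(a - h) + 1 - r = 2*(b - h) + 1 - r" using e fa fb by simp
    thus ?thesis using \<open>\<not> a < h\<close> \<open>\<not> b < h\<close> L by linarith
  next
    assume a: "a < h" "\<not> b < h"
    hence "L - 2 - 2*a = 2*(b - h) + 1 - r" using e fa fb by simp
    hence "2*(h - 1 - a) + r = 2*(b - h) + 1 - r" using a L by linarith
    thus ?thesis using L par by blast
  next
    assume a: "\<not> a < h" "b < h"
    hence "L - 2 - 2*b = 2*(a - h) + 1 - r" using e fa fb by simp
    hence "2*(h - 1 - b) + r = 2*(a - h) + 1 - r" using a L by linarith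
    thus ?thesis using L par by blast
  qed
qed
definition pat :: "nat \<Rightarrow> nat list" where
  "pat L = map (fpat L) [0..<L]"

lemma pat_perm: assumes "L \<ge> 2" shows "pat L \<in> perms L"
proof -
  have inj: "inj_on (fpat L) {0..<L}" using fpat_inj assms by blast
  have sub: "fpat L ` {0..<L} \<subseteq> {0..<L}" using fpat_range assms by auto
  have "card (fpat L ` {0..<L}) = card {0..<L}" using card_image inj by blast
  hence "fpat L ` {0..<L} = {0..<L}" using sub card_subset_eq by (metis finite_atLeastLessThan)
  thus ?thesis unfolding perms_def pat_def using inj by (simp add: distinct_map)
qed

lemma fpat_key:
  assumes "L \<ge> 4" "i < L - 2"
  shows "\<exists>j k. j < L \<and> k < j \<and> fpat L j = fpat L i + 1 \<and> fpat L k = fpat L (Suc i) + 1"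
proof -
  define h where "h = L div 2"
  define r where "r = L mod 2"
  have L: "L = 2*h + r" "r < 2" unfolding h_def r_def by auto
  note f = fpat_alt[OF L]
  show ?thesis
  proof (cases "Suc i < h")
    case True
    show ?thesis
      apply (rule exI[of _ "L - 1 - i"], rule exI[of _ "L - 2 - i"])
      using True L assms unfolding f by auto
  next
    case False
    show ?thesis
    proof (cases "Suc i = h")
      case True
      show ?thesis
      proof (cases "r = 0")
        case True
        show ?thesis
          apply (rule exI[of _ "h"], rule exI[of _ "h - 2"])
          using True \<open>Suc i = h\<close> L assms unfolding f by auto
      next
        case False
        hence r1: "r = 1" using L by auto
        show ?thesis
          apply (rule exI[of _ "h+1"], rule exI[of _ "h - 1"])
          using r1 \<open>Suc i = h\<close> L assms unfolding f by auto
      qed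
    next
      case False
      hence "i \<ge> h" using \<open>\<not> Suc i < h\<close> by auto
      show ?thesis
        apply (rule exI[of _ "L - 2 - i"], rule exI[of _ "L - 3 - i"])
        using \<open>i \<ge> h\<close> L assms unfolding f by auto
    qed
  qed
qed

theorem proposition4:
  fixes N L :: nat
  assumes "N \<ge> 2" and "L \<ge> N + 2"
  shows "\<exists>\<pi>\<in>perms L. forbidden N \<pi>"
proof
  show "pat L \<in> perms L" using pat_perm assms by simp
  show "forbidden N (pat L)"
    unfolding forbidden_def
  proof
    assume "\<exists>\<omega>\<in>seq_space N. defines_pattern \<omega> (pat L)"
    then obtain \<omega> where w: "\<forall>n. \<omega> n < N" and d: "defines_pattern \<omega> (pat L)"
      unfolding seq_space_def by blast
    have len: "length (pat L) = L" unfolding pat_def by simp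
    have nth: "\<And>i. i < L \<Longrightarrow> pat L ! i = fpat L i" unfolding pat_def by simp
    have inc: "\<omega> (fpat L i) < \<omega> (fpat L (Suc i))" if i: "i < L - 2" for i
    proof -
      define a where "a = fpat L i"
      define b where "b = fpat L (Suc i)"
      have ab: "lex_less ((shift ^^ a) \<omega>) ((shift ^^ b) \<omega>)"
      proof -
        have "Suc i < length (pat L)" using i len by linarith
        hence "lex_less ((shift ^^ (pat L ! i)) \<omega>) ((shift ^^ (pat L ! Suc i)) \<omega>)"
          using d unfolding defines_pattern_def by blast
        moreover have "pat L ! i = a" "pat L ! Suc i = b" using nth i unfolding a_def b_def by auto
        ultimately show ?thesis by simp
      qed
      have le: "\<omega> a \<le> \<omega> b" using lex_head[OF ab] by (simp add: pow_shift)
      show ?thesis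
      proof (rule ccontr)
        assume "\<not> ?thesis"
        hence eq: "\<omega> a = \<omega> b" using le a_def b_def by simp
        have t: "lex_less ((shift ^^ Suc a) \<omega>) ((shift ^^ Suc b) \<omega>)"
        proof -
          have "((shift ^^ a) \<omega>) 0 = ((shift ^^ b) \<omega>) 0" using eq by (simp add: pow_shift)
          from lex_tail[OF ab this] show ?thesis by simp
        qed
        have L4: "L \<ge> 4" using assms by linarith
        obtain j k where jk: "j < L" "k < j" "fpat L j = a + 1" "fpat L k = b + 1"
          using fpat_key[OF L4 i] unfolding a_def b_def by blast
        have "lex_less ((shift ^^ (pat L ! k)) \<omega>) ((shift ^^ (pat L ! j)) \<omega>)"
          using chain[OF d jk(2)] jk(1) len by simp
        hence "lex_less ((shift ^^ Suc b) \<omega>) ((shift ^^ Suc a) \<omega>)"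
          using jk nth by simp
        thus False using t lex_asym by blast
      qed
    qed
    have ge: "i \<le> \<omega> (fpat L i)" if "i \<le> L - 2" for i
      using that
    proof (induction i)
      case 0 thus ?case by simp
    next
      case (Suc i)
      thus ?case using inc[of i] by simp
    qed
    have "L - 2 \<le> \<omega> (fpat L (L - 2))" using ge by simp
    moreover have "\<omega> (fpat L (L - 2)) < N" using w by simp
    ultimately show False using assms by simp
  qed
qed

end
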